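(* Let $1\le p_1,p_2,p_3\le\infty$ with $\frac1{p_1}+\frac1{p_2}+\frac1{p_3}\ge2$, and let $r=\left(\frac1{p_1}+\frac1{p_2}+\frac1{p_3}\right)^{-1}\le\tfrac12$. Then there is no constant $C<\infty$ such that $\|C^{1,1,-2}(f_1,f_2,f_3)\|_{L^r(\mathbb{R})}\le C\prod_{j=1}^3\|f_j\|_{L^{p_j}(\mathbb{R})}$ for all Schwartz $f_1,f_2,f_3$. In particular $C^{1,1,-2}$ does not map into $L^r(\mathbb{R})$ for any $r\le 1/2$.
   Context: Fourier transform: $\hat f(\xi)=\int f(x)e^{-2\pi i x\xi}dx$. $C^{1,1,-2}(f_1,f_2,f_3)(x)=\int_{\xi_1<\xi_2<-\xi_3/2}\prod_{j=1}^3\hat f_j(\xi_j)e^{2\pi i x\xi_j}\,d\vec\xi$ for Schwartz $f_j$. *)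

theory Defs
  imports "HOL-Analysis.Analysis" "HOL-Probability.Essential_Supremum"
begin

definition schwartz :: "(real \<Rightarrow> complex) \<Rightarrow> bool" where
  "schwartz f \<longleftrightarrow>
     (\<exists>D :: nat \<Rightarrow> real \<Rightarrow> complex.
        D 0 = f \<and>
        (\<forall>k x. (D k has_vector_derivative D (Suc k) x) (at x)) \<and>
        (\<forall>a k. \<exists>M. \<forall>x. \<bar>x\<bar> ^ a * norm (D k x) \<le> M))"

definition fourier :: "(real \<Rightarrow> complex) \<Rightarrow> real \<Rightarrow> complex" where
  "fourier f \<xi> = (LINT x|lborel. f x * cis (- 2 * pi * x * \<xi>))"

definition C112 :: "(real \<Rightarrow> complex) \<Rightarrow> (real \<Rightarrow> complex) \<Rightarrow> (real \<Rightarrow> complex) \<Rightarrow> real \<Rightarrow> complex" where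
  "C112 f1 f2 f3 x =
     (LINT \<xi>:{\<xi> :: real \<times> real \<times> real. fst \<xi> < fst (snd \<xi>) \<and> fst (snd \<xi>) < - snd (snd \<xi>) / 2}|lborel.
        (case \<xi> of (\<xi>1, \<xi>2, \<xi>3) \<Rightarrow>
          fourier f1 \<xi>1 * cis (2 * pi * x * \<xi>1) *
          fourier f2 \<xi>2 * cis (2 * pi * x * \<xi>2) *
          fourier f3 \<xi>3 * cis (2 * pi * x * \<xi>3)))"

definition Lp_norm :: "ennreal \<Rightarrow> (real \<Rightarrow> complex) \<Rightarrow> ennreal" where
  "Lp_norm p f =
     (if p = \<infinity> then esssup lborel (\<lambda>x. ennreal (norm (f x)))
      else (let I = (\<integral>\<^sup>+ x. ennreal (norm (f x) powr enn2real p) \<partial>lborel)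
            in if I = \<infinity> then \<infinity> else ennreal (enn2real I powr (1 / enn2real p))))"

end

theory Submission
  imports Defs "HOL-Probability.Probability" "HOL-Computational_Algebra.Polynomial" "HOL-Real_Asymp.Real_Asymp"
begin

definition gau :: "real \<Rightarrow> real" where "gau x = exp (- pi * x^2)"
definition fg :: "real \<Rightarrow> complex" where "fg x = complex_of_real (gau x)"

lemma continuous_cis[continuous_intros]: "continuous_on S f \<Longrightarrow> continuous_on S (\<lambda>x. cis (f x))"
  unfolding cis_conv_exp by (intro continuous_intros)
lemma borel_cis[measurable]: "cis \<in> borel_measurable borel"
  by (rule borel_measurable_continuous_onI) (intro continuous_intros continuous_on_id)

lemma fourier_fg: "fourier fg \<xi> = fg \<xi>"
proof -
  have c: "sqrt (2*pi) \<noteq> 0" by simp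
  have "fourier fg \<xi> = (\<integral>x. fg x * cis (- 2 * pi * x * \<xi>) \<partial>lborel)" by (simp add: fourier_def)
  also have "\<dots> = \<bar>1/sqrt (2*pi)\<bar> *\<^sub>R (\<integral>x. fg (0 + (1/sqrt (2*pi)) * x) * cis (- 2 * pi * (0 + (1/sqrt (2*pi)) * x) * \<xi>) \<partial>lborel)"
    by (rule lborel_integral_real_affine) simp
  also have "\<dots> = (\<integral>x. std_normal_density x *\<^sub>R iexp ((- sqrt (2*pi) * \<xi>) * x) \<partial>lborel)"
  proof (subst integral_scaleR_right[symmetric], rule Bochner_Integration.integral_cong[OF refl])
    fix x
    have s2: "sqrt (2*pi) ^ 2 = 2 * pi" by simp
    have e1: "- 2 * pi * (0 + 1 / sqrt (2 * pi) * x) * \<xi> = (- sqrt (2*pi) * \<xi>) * x"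
      using s2 c by (simp add: field_simps power2_eq_square)
    have e2: "- pi * (0 + 1 / sqrt (2 * pi) * x)^2 = - x\<^sup>2 / 2"
      using s2 c by (simp add: field_simps power2_eq_square)
    show "\<bar>1 / sqrt (2 * pi)\<bar> *\<^sub>R (fg (0 + 1 / sqrt (2 * pi) * x) * cis (- 2 * pi * (0 + 1 / sqrt (2 * pi) * x) * \<xi>))
       = std_normal_density x *\<^sub>R iexp (- sqrt (2 * pi) * \<xi> * x)"
      unfolding e1 fg_def gau_def e2 std_normal_density_def
      by (simp add: cis_conv_exp scaleR_conv_of_real mult_ac)
  qed
  also have "\<dots> = char std_normal_distribution (- sqrt (2*pi) * \<xi>)"
    unfolding char_def by (subst integral_density) auto
  also have "\<dots> = fg \<xi>"
    by (simp add: char_std_normal_distribution fg_def gau_def power_mult_distrib)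
  finally show ?thesis .
qed

lemma pow_le_fact_exp: "0 \<le> (t::real) \<Longrightarrow> t ^ n / fact n \<le> exp t"
proof -
  assume t: "0 \<le> t"
  have s: "summable (\<lambda>k. t ^ k /\<^sub>R fact k)" by (rule summable_exp_generic)
  have "t ^ n / fact n \<le> (\<Sum>k<Suc n. t ^ k /\<^sub>R fact k)"
    using t by (simp add: divide_inverse_commute sum_nonneg)
  also have "\<dots> \<le> (\<Sum>k. t ^ k /\<^sub>R fact k)"
    using t by (intro sum_le_suminf[OF s]) auto
  also have "\<dots> = exp t" by (simp add: exp_def)
  finally show ?thesis .
qed

lemma pow_gauss_bound:
  assumes c: "0 < (c::real)"
  shows "\<bar>x\<bar> ^ n * exp (- c * x^2) \<le> fact n * exp (1 / (4*c))"
proof -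
  have "\<bar>x\<bar> ^ n \<le> fact n * exp \<bar>x\<bar>" using pow_le_fact_exp[of "\<bar>x\<bar>" n]
    by (simp add: divide_le_eq mult.commute)
  moreover have "\<bar>x\<bar> - c * x^2 \<le> 1 / (4*c)"
  proof -
    have "0 \<le> (c*\<bar>x\<bar> - 1/2)^2" by simp
    then have "0 \<le> c^2*x^2 - c*\<bar>x\<bar> + 1/4" by (simp add: power2_eq_square algebra_simps)
    then show ?thesis using c by (simp add: field_simps power2_eq_square)
  qed
  ultimately have "\<bar>x\<bar> ^ n * exp (- c * x^2) \<le> fact n * exp \<bar>x\<bar> * exp (- c * x^2)"
    by (intro mult_right_mono) auto
  also have "\<dots> = fact n * exp (\<bar>x\<bar> - c * x^2)" by (simp add: exp_diff exp_minus field_simps)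
  also have "\<dots> \<le> fact n * exp (1 / (4*c))"
    using \<open>\<bar>x\<bar> - c * x^2 \<le> 1 / (4*c)\<close> by simp
  finally show ?thesis .
qed

lemma poly_gauss_bound:
  fixes p :: "real poly"
  assumes c: "0 < c"
  shows "\<exists>M. \<forall>x. \<bar>poly p x\<bar> * exp (- c * x^2) \<le> M"
proof -
  define M where "M = (\<Sum>i\<le>degree p. \<bar>coeff p i\<bar> * (fact i * exp (1/(4*c))))"
  have "\<bar>poly p x\<bar> * exp (- c * x^2) \<le> M" for x
  proof -
    have "\<bar>poly p x\<bar> \<le> (\<Sum>i\<le>degree p. \<bar>coeff p i\<bar> * \<bar>x\<bar>^i)"
      unfolding poly_altdef by (rule order_trans[OF sum_abs]) (simp add: abs_mult power_abs)
    then have "\<bar>poly p x\<bar> * exp (- c * x^2) \<le> (\<Sum>i\<le>degree p. \<bar>coeff p i\<bar> * \<bar>x\<bar>^i) * exp (- c * x^2)"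
      by (intro mult_right_mono) auto
    also have "\<dots> = (\<Sum>i\<le>degree p. \<bar>coeff p i\<bar> * (\<bar>x\<bar>^i * exp (- c * x^2)))"
      by (simp add: sum_distrib_right mult.assoc)
    also have "\<dots> \<le> M" unfolding M_def
      by (intro sum_mono mult_left_mono pow_gauss_bound c) auto
    finally show ?thesis .
  qed
  then show ?thesis by blast
qed

fun Hp :: "nat \<Rightarrow> real poly" where
  "Hp 0 = 1"
| "Hp (Suc k) = pderiv (Hp k) + [:0, - 2 * pi:] * Hp k"

lemma gau_deriv: "(gau has_real_derivative (- 2 * pi * x * gau x)) (at x)"
  unfolding gau_def by (auto intro!: derivative_eq_intros)

lemma schwartz_fg: "schwartz fg"
  unfolding schwartz_def
proof (intro exI[of _ "\<lambda>k x. complex_of_real (poly (Hp k) x * gau x)"] conjI allI)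
  show "(\<lambda>x. complex_of_real (poly (Hp 0) x * gau x)) = fg"
    by (simp add: fg_def[abs_def])
next
  fix k x
  have "((\<lambda>x. poly (Hp k) x * gau x) has_real_derivative
        (poly (pderiv (Hp k)) x * gau x + poly (Hp k) x * (- 2 * pi * x * gau x))) (at x)"
    by (rule DERIV_cong[OF DERIV_mult[OF poly_DERIV gau_deriv]]) simp
  then show "((\<lambda>x. complex_of_real (poly (Hp k) x * gau x)) has_vector_derivative
          complex_of_real (poly (Hp (Suc k)) x * gau x)) (at x)"
    by (intro has_vector_derivative_of_real) (simp add: algebra_simps)
next
  fix a k
  obtain M where M: "\<And>x. \<bar>poly (monom 1 a * Hp k) x\<bar> * exp (- pi * x^2) \<le> M"
    using poly_gauss_bound[of pi "monom 1 a * Hp k"] by auto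
  show "\<exists>M. \<forall>x. \<bar>x\<bar> ^ a * cmod (complex_of_real (poly (Hp k) x * gau x)) \<le> M"
  proof (intro exI allI)
    fix x
    show "\<bar>x\<bar> ^ a * cmod (complex_of_real (poly (Hp k) x * gau x)) \<le> M"
      using M[of x] by (simp add: gau_def poly_monom abs_mult power_abs norm_mult del: of_real_mult)
  qed
qed

lemma gauss_moment_integrable:
  assumes c: "0 < (c::real)"
  shows "integrable lborel (\<lambda>x. \<bar>x\<bar> ^ k * exp (- c * x^2))"
proof -
  define \<sigma> where "\<sigma> = sqrt (1 / (2*c))"
  have s2: "\<sigma>^2 = 1/(2*c)" using c by (simp add: \<sigma>_def)
  have sp: "\<sigma> > 0" using c by (simp add: \<sigma>_def)
  have "integrable lborel (\<lambda>x. sqrt (2 * pi * \<sigma>\<^sup>2) * (normal_density 0 \<sigma> x * \<bar>x - 0\<bar>^k))"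
    using sp by (intro integrable_mult_right integrable_normal_moment_abs) auto
  moreover have "sqrt (2 * pi * \<sigma>\<^sup>2) * (normal_density 0 \<sigma> x * \<bar>x - 0\<bar>^k) = \<bar>x\<bar> ^ k * exp (- c * x^2)" for x
    using c sp unfolding normal_density_def s2 by (simp add: field_simps)
  ultimately have eq: "(\<lambda>x. sqrt (2 * pi * \<sigma>\<^sup>2) * (normal_density 0 \<sigma> x * \<bar>x - 0\<bar>^k)) = (\<lambda>x. \<bar>x\<bar> ^ k * exp (- c * x^2))"
    by auto
  show ?thesis using \<open>integrable lborel _\<close> unfolding eq .
qed

lemma gauss_integrable:
  assumes c: "0 < (c::real)"
  shows "integrable lborel (\<lambda>x. exp (- c * x^2))"
  using gauss_moment_integrable[OF c, of 0] by simp

lemma Lp_fg_finite: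
  assumes p: "1 \<le> p"
  shows "Lp_norm p fg < \<infinity>"
proof (cases "p = \<infinity>")
  case True
  have "esssup lborel (\<lambda>x. ennreal (norm (fg x))) \<le> 1"
    by (rule esssup_I) (auto simp: fg_def gau_def)
  then show ?thesis using True by (simp add: Lp_norm_def order_le_less_trans)
next
  case False
  define q where "q = enn2real p"
  have q: "q \<ge> 1" using enn2real_mono[OF p] False by (simp add: q_def top.not_eq_extremum)
  have "integrable lborel (\<lambda>x. exp (- (q * pi) * x^2))"
    using q by (intro gauss_integrable) simp
  then have "(\<integral>\<^sup>+ x. ennreal (exp (- (q * pi) * x^2)) \<partial>lborel) < \<infinity>"
    by (simp add: integrable_iff_bounded)
  moreover have "norm (fg x) powr q = exp (- (q * pi) * x^2)" for x
    by (simp add: fg_def gau_def powr_def)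
  ultimately show ?thesis using False by (simp add: Lp_norm_def Let_def q_def[symmetric])
qed

lemma nn_integral_inv_infinite:
  assumes a: "1 \<le> (a::real)"
  shows "(\<integral>\<^sup>+x. ennreal (inverse x) * indicator {a..} x \<partial>lborel) = \<infinity>"
proof -
  have "ennreal (ln b - ln a) \<le> (\<integral>\<^sup>+x. ennreal (inverse x) * indicator {a..} x \<partial>lborel)" if b: "b \<ge> a" for b
  proof -
    have "ennreal (ln b - ln a) = (\<integral>\<^sup>+x. ennreal (inverse x) * indicator {a..b} x \<partial>lborel)"
    proof (rule nn_integral_FTC_Icc[symmetric])
      show "(\<lambda>x::real. inverse x) \<in> borel_measurable borel" by measurable
      show "DERIV ln x :> inverse x" if "x \<in> {a..b}" for x using that a by (intro DERIV_ln) auto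
      show "0 \<le> inverse x" if "x \<in> {a..b}" for x using that a by auto
    qed (use b in auto)
    also have "\<dots> \<le> (\<integral>\<^sup>+x. ennreal (inverse x) * indicator {a..} x \<partial>lborel)"
      by (intro nn_integral_mono) (auto split: split_indicator)
    finally show ?thesis .
  qed
  note le = this
  show ?thesis
  proof (rule ccontr)
    assume "(\<integral>\<^sup>+x. ennreal (inverse x) * indicator {a..} x \<partial>lborel) \<noteq> \<infinity>"
    then obtain R where R: "(\<integral>\<^sup>+x. ennreal (inverse x) * indicator {a..} x \<partial>lborel) = ennreal R" "0 \<le> R"
      by (cases "(\<integral>\<^sup>+x. ennreal (inverse x) * indicator {a..} x \<partial>lborel)" rule: ennreal_cases) auto
    define b where "b = exp (R + 1 + ln a)"
    have ba: "b \<ge> a"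
    proof -
      have "a = exp (ln a)" using a by simp
      also have "\<dots> \<le> b" unfolding b_def using R(2) by simp
      finally show ?thesis .
    qed
    have "ln b - ln a = R + 1" using a unfolding b_def by (subst ln_exp) simp
    then have "ennreal (R + 1) \<le> ennreal R" using le[OF ba] R(1) by simp
    then show False using R(2) by (subst (asm) ennreal_le_iff) auto
  qed
qed

lemma distr_fiber:
  fixes g :: "'a::euclidean_space \<Rightarrow> 'b::euclidean_space \<Rightarrow> 'b"
  assumes T: "(\<lambda>z. (fst z, g (fst z) (snd z))) \<in> measurable (lborel \<Otimes>\<^sub>M lborel) (lborel \<Otimes>\<^sub>M lborel)"
    and gm: "\<And>x. g x \<in> measurable lborel lborel"
    and pres: "\<And>x. distr lborel lborel (g x) = lborel"
  shows "distr (lborel \<Otimes>\<^sub>M lborel) (lborel \<Otimes>\<^sub>M lborel) (\<lambda>z. (fst z, g (fst z) (snd z))) = (lborel \<Otimes>\<^sub>M lborel)"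
proof (rule measure_eqI)
  show "sets (distr (lborel \<Otimes>\<^sub>M lborel) (lborel \<Otimes>\<^sub>M lborel) (\<lambda>z. (fst z, g (fst z) (snd z)))) = sets (lborel \<Otimes>\<^sub>M lborel)"
    by simp
next
  fix A assume "A \<in> sets (distr (lborel \<Otimes>\<^sub>M lborel) (lborel \<Otimes>\<^sub>M lborel) (\<lambda>z. (fst z, g (fst z) (snd z))))"
  then have A: "A \<in> sets (lborel \<Otimes>\<^sub>M (lborel :: 'b measure))" by simp
  let ?T = "\<lambda>z::'a\<times>'b. (fst z, g (fst z) (snd z))"
  have pre: "?T -` A \<inter> space (lborel \<Otimes>\<^sub>M lborel) \<in> sets (lborel \<Otimes>\<^sub>M lborel)"
    using measurable_sets[OF T A] .
  have "emeasure (distr (lborel \<Otimes>\<^sub>M lborel) (lborel \<Otimes>\<^sub>M lborel) ?T) A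
      = emeasure (lborel \<Otimes>\<^sub>M lborel) (?T -` A \<inter> space (lborel \<Otimes>\<^sub>M lborel))"
    by (rule emeasure_distr[OF T A])
  also have "\<dots> = (\<integral>\<^sup>+x. emeasure lborel (Pair x -` (?T -` A \<inter> space (lborel \<Otimes>\<^sub>M lborel))) \<partial>lborel)"
    by (rule lborel.emeasure_pair_measure_alt[OF pre])
  also have "\<dots> = (\<integral>\<^sup>+x. emeasure lborel (Pair x -` A) \<partial>lborel)"
  proof (rule nn_integral_cong)
    fix x :: 'a
    have B: "Pair x -` A \<in> sets (lborel :: 'b measure)"
      using A by (rule sets_Pair1)
    have "Pair x -` (?T -` A \<inter> space (lborel \<Otimes>\<^sub>M lborel)) = g x -` (Pair x -` A) \<inter> space lborel"
      by (auto simp: space_pair_measure)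
    also have "emeasure lborel \<dots> = emeasure (distr lborel lborel (g x)) (Pair x -` A)"
      by (rule emeasure_distr[OF gm B, symmetric])
    also have "\<dots> = emeasure lborel (Pair x -` A)" by (simp add: pres)
    finally show "emeasure lborel (Pair x -` (?T -` A \<inter> space (lborel \<Otimes>\<^sub>M lborel))) = emeasure lborel (Pair x -` A)" .
  qed
  also have "\<dots> = emeasure (lborel \<Otimes>\<^sub>M lborel) A"
    by (rule lborel.emeasure_pair_measure_alt[OF A, symmetric])
  finally show "emeasure (distr (lborel \<Otimes>\<^sub>M lborel) (lborel \<Otimes>\<^sub>M lborel) ?T) A = emeasure (lborel \<Otimes>\<^sub>M lborel) A" .
qed

lemma distr_refl_shift: "distr lborel lborel (\<lambda>s::real. k - s) = lborel"
proof -
  have "lborel = density (distr lborel borel (\<lambda>x::real. k + (-1) * x)) (\<lambda>_. ennreal \<bar>-1\<bar>)"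
    by (rule lborel_real_affine) simp
  then have "distr lborel borel (\<lambda>x::real. k + (-1) * x) = lborel" by (simp add: density_1)
  moreover have "distr lborel lborel (\<lambda>s::real. k - s) = distr lborel borel (\<lambda>x::real. k + (-1) * x)"
    by (rule distr_cong) auto
  ultimately show ?thesis by simp
qed

definition Tm :: "real \<times> real \<times> real \<Rightarrow> real \<times> real \<times> real" where
  "Tm z = (fst z, (fst z + fst (snd z), - snd (snd z) - 2 * fst z - fst (snd z)))"

lemma cont_meas_lb: "continuous_on UNIV f \<Longrightarrow> f \<in> measurable lborel lborel"
  by (simp add: borel_measurable_continuous_onI)

lemma Tm_meas[measurable]: "Tm \<in> measurable lborel lborel"
  unfolding Tm_def by (intro cont_meas_lb continuous_intros)

lemma distr_Tm: "distr lborel lborel Tm = lborel"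
proof -
  define g1 where "g1 a = (\<lambda>z::real\<times>real. (fst z, (- 2 * a - fst z) - snd z))" for a :: real
  define g where "g a = (\<lambda>z::real\<times>real. (a, 0) + g1 a z)" for a :: real
  have g1m: "g1 a \<in> measurable lborel lborel" for a unfolding g1_def by (intro cont_meas_lb continuous_intros)
  have g1p: "distr lborel lborel (g1 a) = lborel" for a
  proof -
    have "distr (lborel \<Otimes>\<^sub>M lborel) (lborel \<Otimes>\<^sub>M lborel) (\<lambda>z::real\<times>real. (fst z, (\<lambda>t s. (- 2 * a - t) - s) (fst z) (snd z))) = (lborel \<Otimes>\<^sub>M lborel)"
      by (rule distr_fiber) (auto simp: distr_refl_shift)
    then show ?thesis by (simp add: lborel_prod g1_def)
  qed
  have gm: "g a \<in> measurable lborel lborel" for a unfolding g_def g1_def by (intro cont_meas_lb continuous_intros)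
  have gp: "distr lborel lborel (g a) = lborel" for a
  proof -
    have "distr lborel lborel (g a) = distr (distr lborel lborel (g1 a)) lborel ((+) (a, 0))"
      by (subst distr_distr) (auto simp: g_def comp_def g1m[simplified])
    also have "\<dots> = distr lborel lborel ((+) (a, 0))" by (simp add: g1p)
    also have "\<dots> = distr lborel borel ((+) (a, 0))" by (rule distr_cong) auto
    also have "\<dots> = lborel" by (rule lborel_distr_plus)
    finally show ?thesis .
  qed
  have "distr (lborel \<Otimes>\<^sub>M lborel) (lborel \<Otimes>\<^sub>M lborel) (\<lambda>z::real\<times>(real\<times>real). (fst z, g (fst z) (snd z))) = (lborel \<Otimes>\<^sub>M lborel)"
    by (rule distr_fiber[OF _ gm gp]) (unfold lborel_prod g_def g1_def, intro cont_meas_lb continuous_intros)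
  moreover have "(\<lambda>z::real\<times>(real\<times>real). (fst z, g (fst z) (snd z))) = Tm"
    by (auto simp: g_def g1_def Tm_def fun_eq_iff algebra_simps)
  ultimately show ?thesis by (simp add: lborel_prod)
qed

section \<open>Integration by parts on a half line\<close>

lemma ibp_half:
  fixes \<phi> \<phi>' :: "real \<Rightarrow> real" and \<omega> :: real
  assumes w: "\<omega> \<noteq> 0"
    and d: "\<And>s. (\<phi> has_real_derivative \<phi>' s) (at s)"
    and c': "continuous_on UNIV \<phi>'"
    and i: "integrable lborel \<phi>" and i': "integrable lborel \<phi>'"
    and lim: "(\<phi> \<longlongrightarrow> 0) at_top"
  shows "(LBINT s=0..\<infinity>. complex_of_real (\<phi> s) * cis (- \<omega> * s)) =
      complex_of_real (\<phi> 0) / (\<i> * \<omega>) + (LBINT s=0..\<infinity>. complex_of_real (\<phi>' s) * cis (- \<omega> * s)) / (\<i> * \<omega>)"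
proof -
  define F where "F s = complex_of_real (\<phi> s) * cis (- \<omega> * s) / (- \<i> * \<omega>)" for s
  define f where "f s = complex_of_real (\<phi> s) * cis (- \<omega> * s) + complex_of_real (\<phi>' s) * cis (- \<omega> * s) / (- \<i> * \<omega>)" for s
  have cis_d: "((\<lambda>s. cis (- \<omega> * s)) has_vector_derivative (- \<i> * \<omega>) * cis (- \<omega> * s)) (at s)" for s
  proof -
    have "((\<lambda>s. - \<omega> * s) has_derivative (\<lambda>t. - \<omega> * t)) (at s)"
      by (auto intro!: derivative_eq_intros)
    then have "((\<lambda>s. cis (- \<omega> * s)) has_derivative (\<lambda>t. (- \<omega> * t) *\<^sub>R (\<i> * cis (- \<omega> * s)))) (at s)"
      by (rule has_derivative_cis)
    then show ?thesis unfolding has_vector_derivative_def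
      by (rule has_derivative_eq_rhs) (auto simp: fun_eq_iff scaleR_conv_of_real algebra_simps)
  qed
  have Fd: "(F has_vector_derivative f s) (at s)" for s
  proof -
    have "((\<lambda>s. complex_of_real (\<phi> s) * cis (- \<omega> * s)) has_vector_derivative
         (complex_of_real (\<phi> s) * ((- \<i> * \<omega>) * cis (- \<omega> * s)) + complex_of_real (\<phi>' s) * cis (- \<omega> * s))) (at s)"
      by (intro has_vector_derivative_mult has_vector_derivative_of_real d cis_d)
    then have "((\<lambda>s. complex_of_real (\<phi> s) * cis (- \<omega> * s) * (1 / (- \<i> * \<omega>))) has_vector_derivative
         (complex_of_real (\<phi> s) * ((- \<i> * \<omega>) * cis (- \<omega> * s)) + complex_of_real (\<phi>' s) * cis (- \<omega> * s)) * (1 / (- \<i> * \<omega>))) (at s)"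
      by (rule has_vector_derivative_mult_left)
    moreover have "(complex_of_real (\<phi> s) * ((- \<i> * \<omega>) * cis (- \<omega> * s)) + complex_of_real (\<phi>' s) * cis (- \<omega> * s)) * (1 / (- \<i> * \<omega>)) = f s"
      using w by (simp add: f_def field_simps)
    ultimately show ?thesis unfolding F_def by (simp add: field_simps)
  qed
  have cphi: "continuous_on UNIV \<phi>"
    using d by (intro continuous_at_imp_continuous_on ballI DERIV_isCont) auto
  have mphi[measurable]: "\<phi> \<in> borel_measurable borel" "\<phi>' \<in> borel_measurable borel"
    using cphi c' by (auto intro: borel_measurable_continuous_onI)
  have ic: "integrable lborel (\<lambda>s. complex_of_real (g s) * cis (- \<omega> * s))" if "integrable lborel g" "g \<in> borel_measurable borel" for g
  proof -
    have [measurable]: "g \<in> borel_measurable borel" by (rule that(2))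
    have "(\<lambda>s. complex_of_real (g s) * cis (- \<omega> * s)) \<in> borel_measurable lborel" by measurable
    then show ?thesis by (rule Bochner_Integration.integrable_bound[OF that(1)]) (auto simp: norm_mult)
  qed
  have icphi: "integrable lborel (\<lambda>s. complex_of_real (\<phi> s) * cis (- \<omega> * s))" by (rule ic[OF i mphi(1)])
  have icphi': "integrable lborel (\<lambda>s. complex_of_real (\<phi>' s) * cis (- \<omega> * s))" by (rule ic[OF i' mphi(2)])
  have ilb: "interval_lebesgue_integrable lborel 0 \<infinity> g" if "integrable lborel g" for g :: "real \<Rightarrow> complex"
    unfolding interval_lebesgue_integrable_def set_integrable_def using that
    by (simp add: integrable_mult_indicator)
  have eq: "(LBINT s=0..\<infinity>. f s) = - F 0"
  proof -
    have "(LBINT s=0..\<infinity>. f s) = 0 - F 0"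
    proof (rule interval_integral_FTC_integrable)
      show "(F has_vector_derivative f x) (at x)" for x by (rule Fd)
      show "isCont f x" for x unfolding f_def
        using cphi c' w by (intro continuous_intros) (auto simp: continuous_on_eq_continuous_at cis_conv_exp intro!: continuous_intros)
      show "set_integrable lborel (einterval 0 \<infinity>) f"
      proof -
        have "integrable lborel f" unfolding f_def using icphi icphi' by (intro Bochner_Integration.integrable_add integrable_divide)
        then show ?thesis unfolding set_integrable_def by (intro integrable_mult_indicator) auto
      qed
      have "isCont F 0" using Fd[of 0] by (rule has_vector_derivative_continuous)
      then have "(F \<longlongrightarrow> F 0) (at_right 0)" by (simp add: isCont_def filterlim_at_split)
      then show "((F \<circ> real_of_ereal) \<longlongrightarrow> F 0) (at_right 0)"
        unfolding zero_ereal_def ereal_tendsto_simps1 .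
      have "(F \<longlongrightarrow> 0) at_top"
      proof (rule Lim_null_comparison)
        show "\<forall>\<^sub>F s in at_top. norm (F s) \<le> \<bar>\<phi> s\<bar> / \<bar>\<omega>\<bar>"
          by (simp add: F_def norm_mult norm_divide)
        show "((\<lambda>s. \<bar>\<phi> s\<bar> / \<bar>\<omega>\<bar>) \<longlongrightarrow> 0) at_top"
          using tendsto_divide[OF tendsto_rabs_zero[OF lim] tendsto_const[of "\<bar>\<omega>\<bar>"]] w by simp
      qed
      then show "((F \<circ> real_of_ereal) \<longlongrightarrow> 0) (at_left \<infinity>)"
        unfolding ereal_tendsto_simps1 .
    qed simp
    then show ?thesis by simp
  qed
  have "(LBINT s=0..\<infinity>. f s) = (LBINT s=0..\<infinity>. complex_of_real (\<phi> s) * cis (- \<omega> * s))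
        + (LBINT s=0..\<infinity>. complex_of_real (\<phi>' s) * cis (- \<omega> * s)) / (- \<i> * \<omega>)"
    unfolding f_def using ilb[OF icphi] ilb[OF icphi'] by simp
  then show ?thesis using eq w unfolding F_def by (simp add: field_simps)
qed

definition gA :: "real \<Rightarrow> real" where "gA s = exp (- (pi/3) * s^2)"
definition wB :: "real \<Rightarrow> real" where "wB s = exp (- (pi/2) * s^2)"
definition W :: "real \<Rightarrow> real" where "W s = (LBINT t=ereal 0..ereal s. wB t)"
definition Fam :: "real poly \<Rightarrow> real poly \<Rightarrow> real \<Rightarrow> real" where
  "Fam P Q s = poly P s * gA s * W s + poly Q s * gA s * wB s"
definition D1 :: "real poly \<Rightarrow> real poly" where "D1 P = pderiv P + [:0, - 2 * (pi/3):] * P"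
definition D2 :: "real poly \<Rightarrow> real poly \<Rightarrow> real poly" where
  "D2 P Q = P + pderiv Q + [:0, - 2 * (pi/3 + pi/2):] * Q"

lemma gA_deriv: "(gA has_real_derivative (- 2 * (pi/3) * s * gA s)) (at s)"
  unfolding gA_def by (auto intro!: derivative_eq_intros)
lemma wB_deriv: "(wB has_real_derivative (- 2 * (pi/2) * s * wB s)) (at s)"
  unfolding wB_def by (auto intro!: derivative_eq_intros)

lemma wB_pos: "0 < wB s" and wB_le1: "wB s \<le> 1"
  by (auto simp: wB_def)
lemma gA_pos: "0 < gA s" by (auto simp: gA_def)

lemma cont_wB: "continuous_on A wB"
  unfolding wB_def by (intro continuous_intros)

lemma W_deriv: "(W has_real_derivative wB s) (at s)"
proof -
  have "((\<lambda>u. LBINT y=ereal 0..ereal u. wB y) has_vector_derivative (wB s)) (at s within {-\<bar>s\<bar>-1..\<bar>s\<bar>+1})"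
    by (rule interval_integral_FTC2) (auto intro: cont_wB)
  then have "(W has_vector_derivative (wB s)) (at s)"
    unfolding W_def[abs_def] by (subst (asm) at_within_Icc_at) auto
  then show ?thesis by (simp add: has_real_derivative_iff_has_vector_derivative)
qed

lemma W0: "W 0 = 0" unfolding W_def by (rule interval_integral_endpoints_same)

lemma W_bound: "\<bar>W s\<bar> \<le> \<bar>s\<bar>"
proof (cases "s = 0")
  case True then show ?thesis by (simp add: W0)
next
  case False
  have "\<exists>z. (min 0 s) < z \<and> z < max 0 s \<and> W (max 0 s) - W (min 0 s) = (max 0 s - min 0 s) * wB z"
    using False by (intro MVT2) (auto intro: W_deriv)
  then obtain z where z: "W (max 0 s) - W (min 0 s) = (max 0 s - min 0 s) * wB z" by blast
  have "\<bar>W s\<bar> = \<bar>max 0 s - min 0 s\<bar> * wB z"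
    using z W0 wB_pos[of z] by (cases "0 \<le> s") (auto simp: abs_mult)
  also have "\<dots> \<le> \<bar>s\<bar>"
    using wB_le1[of z] wB_pos[of z] by (cases "0 \<le> s") (auto intro: mult_left_le)
  finally show ?thesis .
qed

lemma Fam_deriv: "(Fam P Q has_real_derivative Fam (D1 P) (D2 P Q) s) (at s)"
proof -
  have "((\<lambda>s. poly P s * gA s * W s + poly Q s * gA s * wB s) has_real_derivative
     ((poly (pderiv P) s * gA s + (- 2 * (pi/3) * s * gA s) * poly P s) * W s + wB s * (poly P s * gA s)) +
     ((poly (pderiv Q) s * gA s + (- 2 * (pi/3) * s * gA s) * poly Q s) * wB s + (- 2 * (pi/2) * s * wB s) * (poly Q s * gA s))) (at s)"
    by (intro DERIV_add DERIV_mult poly_DERIV gA_deriv wB_deriv W_deriv)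
  moreover have "((poly (pderiv P) s * gA s + (- 2 * (pi/3) * s * gA s) * poly P s) * W s + wB s * (poly P s * gA s)) +
     ((poly (pderiv Q) s * gA s + (- 2 * (pi/3) * s * gA s) * poly Q s) * wB s + (- 2 * (pi/2) * s * wB s) * (poly Q s * gA s))
     = Fam (D1 P) (D2 P Q) s"
    by (simp add: Fam_def D1_def D2_def algebra_simps)
  ultimately show ?thesis unfolding Fam_def[abs_def] by simp
qed

lemma Fam_0: "Fam P Q 0 = poly Q 0"
  by (simp add: Fam_def W0 gA_def wB_def)

lemma Fam_bound: "\<exists>M. \<forall>s. \<bar>Fam P Q s\<bar> \<le> M * exp (- (pi/6) * s^2)"
proof -
  obtain M1 where M1: "\<And>s. \<bar>poly (P * [:0,1:]) s\<bar> * exp (- (pi/6) * s^2) \<le> M1"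
    using poly_gauss_bound[of "pi/6" "P * [:0,1:]"] by auto
  obtain M2 where M2: "\<And>s. \<bar>poly Q s\<bar> * exp (- (pi/6) * s^2) \<le> M2"
    using poly_gauss_bound[of "pi/6" Q] by auto
  have "\<bar>Fam P Q s\<bar> \<le> (M1 + M2) * exp (- (pi/6) * s^2)" for s
  proof -
    have e: "gA s = exp (- (pi/6) * s^2) * exp (- (pi/6) * s^2)"
      by (simp add: gA_def exp_add[symmetric])
    have "\<bar>Fam P Q s\<bar> \<le> \<bar>poly P s\<bar> * gA s * \<bar>W s\<bar> + \<bar>poly Q s\<bar> * gA s * wB s"
      unfolding Fam_def using gA_pos[of s] wB_pos[of s]
      by (rule_tac order_trans[OF abs_triangle_ineq]) (simp add: abs_mult)
    also have "\<dots> \<le> \<bar>poly P s\<bar> * gA s * \<bar>s\<bar> + \<bar>poly Q s\<bar> * gA s"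
      using W_bound[of s] wB_le1[of s] gA_pos[of s]
      by (intro add_mono mult_left_mono) (auto intro: mult_left_le)
    also have "\<dots> = (\<bar>poly (P * [:0,1:]) s\<bar> * exp (- (pi/6) * s^2) + \<bar>poly Q s\<bar> * exp (- (pi/6) * s^2)) * exp (- (pi/6) * s^2)"
      unfolding e by (simp add: abs_mult algebra_simps)
    also have "\<dots> \<le> (M1 + M2) * exp (- (pi/6) * s^2)"
      by (intro mult_right_mono add_mono M1 M2) auto
    finally show ?thesis .
  qed
  then show ?thesis by blast
qed

lemma Fam_cont: "continuous_on A (Fam P Q)"
  using Fam_deriv by (intro continuous_at_imp_continuous_on ballI DERIV_isCont) auto

lemma Fam_meas[measurable]: "Fam P Q \<in> borel_measurable borel"
  by (intro borel_measurable_continuous_onI Fam_cont)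

lemma Fam_integrable: "integrable lborel (Fam P Q)"
proof -
  obtain M where M: "\<And>s. \<bar>Fam P Q s\<bar> \<le> M * exp (- (pi/6) * s^2)" using Fam_bound by blast
  show ?thesis
  proof (rule Bochner_Integration.integrable_bound)
    show "integrable lborel (\<lambda>s. M * exp (- (pi/6) * s^2))"
      by (intro integrable_mult_right gauss_integrable) simp
    show "AE x in lborel. norm (Fam P Q x) \<le> norm (M * exp (- (pi / 6) * x\<^sup>2))"
      using M by (auto intro: order_trans[OF _ abs_ge_self])
  qed simp
qed

lemma Fam_lim: "(Fam P Q \<longlongrightarrow> 0) at_top"
proof -
  obtain M where M: "\<And>s. \<bar>Fam P Q s\<bar> \<le> M * exp (- (pi/6) * s^2)" using Fam_bound by blast
  show ?thesis
  proof (rule Lim_null_comparison)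
    show "\<forall>\<^sub>F s in at_top. norm (Fam P Q s) \<le> M * exp (- (pi/6) * s^2)" using M by simp
    have "((\<lambda>s::real. exp (- (pi/6) * s^2)) \<longlongrightarrow> 0) at_top" by real_asymp
    then show "((\<lambda>s. M * exp (- (pi/6) * s^2)) \<longlongrightarrow> 0) at_top"
      using tendsto_mult_right_zero by blast
  qed
qed

fun PQ :: "nat \<Rightarrow> real poly \<times> real poly" where
  "PQ 0 = ([:1 / sqrt 6:], 0)"
| "PQ (Suc k) = (D1 (fst (PQ k)), D2 (fst (PQ k)) (snd (PQ k)))"

definition phi :: "nat \<Rightarrow> real \<Rightarrow> real" where "phi k = Fam (fst (PQ k)) (snd (PQ k))"

lemma phi_deriv: "(phi k has_real_derivative phi (Suc k) s) (at s)"
  unfolding phi_def by (simp add: Fam_deriv)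

lemma phi_step:
  assumes w: "\<omega> \<noteq> 0"
  shows "(LBINT s=0..\<infinity>. complex_of_real (phi k s) * cis (- \<omega> * s)) =
      complex_of_real (phi k 0) / (\<i> * \<omega>) + (LBINT s=0..\<infinity>. complex_of_real (phi (Suc k) s) * cis (- \<omega> * s)) / (\<i> * \<omega>)"
proof (rule ibp_half[OF w phi_deriv])
  show "continuous_on UNIV (phi (Suc k))" unfolding phi_def by (rule Fam_cont)
  show "integrable lborel (phi k)" unfolding phi_def by (rule Fam_integrable)
  show "integrable lborel (phi (Suc k))" unfolding phi_def by (rule Fam_integrable)
  show "(phi k \<longlongrightarrow> 0) at_top" unfolding phi_def by (rule Fam_lim)
qed

lemma phi00: "phi 0 0 = 0" by (simp add: phi_def Fam_0)
lemma phi10: "phi 1 0 = 1 / sqrt 6" by (simp add: phi_def Fam_0 D2_def)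

lemma tail_bound:
  "norm (LBINT s=0..\<infinity>. complex_of_real (phi 3 s) * cis (- \<omega> * s)) \<le> (LBINT s. \<bar>phi 3 s\<bar>)"
proof -
  have i: "integrable lborel (phi 3)" unfolding phi_def by (rule Fam_integrable)
  have m[measurable]: "phi 3 \<in> borel_measurable borel" unfolding phi_def by measurable
  have ic: "integrable lborel (\<lambda>s. complex_of_real (phi 3 s) * cis (- \<omega> * s))"
  proof -
    have "(\<lambda>s. complex_of_real (phi 3 s) * cis (- \<omega> * s)) \<in> borel_measurable lborel" by measurable
    then show ?thesis by (rule Bochner_Integration.integrable_bound[OF i]) (auto simp: norm_mult)
  qed
  have "norm (LBINT s=0..\<infinity>. complex_of_real (phi 3 s) * cis (- \<omega> * s))
     = norm (LBINT s. indicator (einterval 0 \<infinity>) s *\<^sub>R (complex_of_real (phi 3 s) * cis (- \<omega> * s)))"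
    by (simp add: interval_lebesgue_integral_def set_lebesgue_integral_def)
  also have "\<dots> \<le> (LBINT s. norm (indicator (einterval 0 \<infinity>) s *\<^sub>R (complex_of_real (phi 3 s) * cis (- \<omega> * s))))"
    by (rule integral_norm_bound)
  also have "\<dots> \<le> (LBINT s. \<bar>phi 3 s\<bar>)"
  proof (rule integral_mono)
    show "integrable lborel (\<lambda>s. norm (indicator (einterval 0 \<infinity>) s *\<^sub>R (complex_of_real (phi 3 s) * cis (- \<omega> * s))))"
      using ic by (intro integrable_norm integrable_mult_indicator) auto
    show "integrable lborel (\<lambda>s. \<bar>phi 3 s\<bar>)" using i by (rule integrable_abs)
  qed (auto simp: norm_mult split: split_indicator)
  finally show ?thesis .
qed

lemma asym:
  "\<exists>\<omega>0>0. \<forall>\<omega>\<ge>\<omega>0. (1 / sqrt 6) / (2 * \<omega>^2) \<le> norm (LBINT s=0..\<infinity>. complex_of_real (phi 0 s) * cis (- \<omega> * s))"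
proof -
  define c0 where "c0 = 1 / sqrt 6"
  have c0: "c0 > 0" by (simp add: c0_def)
  define B where "B = (LBINT s. \<bar>phi 3 s\<bar>) + \<bar>phi 2 0\<bar>"
  have B: "B \<ge> 0" unfolding B_def by (intro add_nonneg_nonneg integral_nonneg_AE) auto
  define \<omega>0 where "\<omega>0 = 2 * B / c0 + 1"
  have w0: "\<omega>0 > 0" using B c0 unfolding \<omega>0_def by (simp add: add_nonneg_pos)
  have "c0 / (2 * \<omega>^2) \<le> norm (LBINT s=0..\<infinity>. complex_of_real (phi 0 s) * cis (- \<omega> * s))" if w: "\<omega> \<ge> \<omega>0" for \<omega>
  proof -
    have wp: "\<omega> > 0" using w w0 by simp
    define T where "T k = (LBINT s=0..\<infinity>. complex_of_real (phi k s) * cis (- \<omega> * s))" for k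
    have st: "T k = complex_of_real (phi k 0) / (\<i> * \<omega>) + T (Suc k) / (\<i> * \<omega>)" for k
      unfolding T_def using wp by (intro phi_step) simp
    have "T 0 = (complex_of_real c0 * (\<i> * \<omega>) + complex_of_real (phi 2 0) + T 3) / (\<i> * \<omega>)^3"
    proof -
      have e0: "T 0 = T 1 / (\<i> * \<omega>)" using st[of 0] phi00 by simp
      have e1: "T 1 = complex_of_real c0 / (\<i> * \<omega>) + T 2 / (\<i> * \<omega>)"
        using st[of 1] phi10 unfolding c0_def by (simp add: numeral_2_eq_2)
      have e2: "T 2 = complex_of_real (phi 2 0) / (\<i> * \<omega>) + T 3 / (\<i> * \<omega>)"
        using st[of 2] by (simp add: numeral_3_eq_3 numeral_2_eq_2)
      show ?thesis unfolding e0 e1 e2 using wp by (simp add: field_simps power3_eq_cube)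
    qed
    then have "norm (T 0) = norm (complex_of_real c0 * (\<i> * \<omega>) + complex_of_real (phi 2 0) + T 3) / \<omega>^3"
      using wp by (simp add: norm_divide norm_mult norm_power)
    also have "\<dots> \<ge> (c0 * \<omega> - B) / \<omega>^3"
    proof (rule divide_right_mono)
      have "norm (complex_of_real (phi 2 0) + T 3) \<le> B"
        using tail_bound[of \<omega>] unfolding B_def T_def
        by (rule_tac order_trans[OF norm_triangle_ineq]) simp
      moreover have "norm (complex_of_real c0 * (\<i> * \<omega>)) = c0 * \<omega>" using wp c0 by (simp add: norm_mult)
      ultimately show "c0 * \<omega> - B \<le> norm (complex_of_real c0 * (\<i> * \<omega>) + complex_of_real (phi 2 0) + T 3)"
      proof -
        have key: "norm a - norm b \<le> norm (a + b)" for a b :: complex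
          using norm_triangle_ineq2[of a "-b"] by simp
        show ?thesis using key[of "complex_of_real c0 * (\<i> * \<omega>)" "complex_of_real (phi 2 0) + T 3"] 
            \<open>norm (complex_of_real (phi 2 0) + T 3) \<le> B\<close> \<open>norm (complex_of_real c0 * (\<i> * \<omega>)) = c0 * \<omega>\<close>
          by (simp add: add.assoc)
      qed
    qed (use wp in simp)
    finally have "(c0 * \<omega> - B) / \<omega>^3 \<le> norm (T 0)" .
    moreover have "c0 / (2 * \<omega>^2) \<le> (c0 * \<omega> - B) / \<omega>^3"
    proof -
      have "2 * B \<le> c0 * \<omega>" using w c0 unfolding \<omega>0_def by (simp add: field_simps)
      then have "c0 * \<omega> \<le> 2 * (c0 * \<omega> - B)" by (simp add: algebra_simps)
      then show ?thesis using wp by (simp add: field_simps eval_nat_numeral)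
    qed
    ultimately show ?thesis unfolding T_def by simp
  qed
  then show ?thesis using w0 unfolding c0_def by blast
qed

lemma prod_int:
  fixes f :: "real \<Rightarrow> real" and g :: "'b::euclidean_space \<Rightarrow> real"
  assumes f: "integrable lborel f" and g: "integrable lborel g"
  shows "integrable lborel (\<lambda>z. f (fst z) * g (snd z))"
proof -
  have [measurable]: "f \<in> borel_measurable borel" "g \<in> borel_measurable borel"
    using f g by (auto dest: borel_measurable_integrable)
  have "integrable (lborel \<Otimes>\<^sub>M lborel) (\<lambda>z. f (fst z) * g (snd z))"
  proof (rule lborel_pair.Fubini_integrable)
    show "(\<lambda>z. f (fst z) * g (snd z)) \<in> borel_measurable (lborel \<Otimes>\<^sub>M lborel)" by measurable
    have "integrable lborel (\<lambda>x. \<bar>f x\<bar> * (\<integral>y. norm (g y) \<partial>lborel))"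
      using f by (intro integrable_mult_left integrable_abs)
    then show "integrable lborel (\<lambda>x. \<integral>y. norm (f (fst (x, y)) * g (snd (x, y))) \<partial>lborel)"
      by (simp add: abs_mult)
    show "AE x in lborel. integrable lborel (\<lambda>y. f (fst (x, y)) * g (snd (x, y)))"
      using g by simp
  qed
  then show ?thesis by (simp add: lborel_prod)
qed

lemma gau_integrable: "integrable lborel gau"
  unfolding gau_def[abs_def] using gauss_integrable[of pi] by simp

lemma gau_meas[measurable]: "gau \<in> borel_measurable borel"
  unfolding gau_def[abs_def] by measurable

definition Sc :: "(real \<times> real \<times> real) set" where
  "Sc = {\<xi>. fst \<xi> < fst (snd \<xi>) \<and> fst (snd \<xi>) < - snd (snd \<xi>) / 2}"

definition Phi :: "real \<Rightarrow> real \<times> real \<times> real \<Rightarrow> complex" where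
  "Phi x \<xi> = complex_of_real (gau (fst \<xi>) * gau (fst (snd \<xi>)) * gau (snd (snd \<xi>))) *
      cis (2 * pi * x * (fst \<xi> + fst (snd \<xi>) + snd (snd \<xi>)))"

lemma Sc_sets[measurable]: "Sc \<in> sets lborel"
proof -
  have "open Sc" unfolding Sc_def
    by (intro open_Collect_conj open_Collect_less continuous_intros) auto
  then show ?thesis by simp
qed

lemma Phi_meas[measurable]: "Phi x \<in> borel_measurable lborel"
  unfolding Phi_def gau_def[abs_def] by (simp add: borel_measurable_continuous_onI continuous_intros)

lemma step1: "C112 fg fg fg x = (\<integral>\<xi>. indicator Sc \<xi> *\<^sub>R Phi x \<xi> \<partial>lborel)"
proof -
  have eqf: "(\<lambda>\<xi>. case \<xi> of (\<xi>1, \<xi>2, \<xi>3) \<Rightarrow> fg \<xi>1 * cis (2 * pi * x * \<xi>1) * fg \<xi>2 * cis (2 * pi * x * \<xi>2) * fg \<xi>3 * cis (2 * pi * x * \<xi>3)) = Phi x"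
  proof (rule ext)
    fix \<xi> :: "real \<times> real \<times> real"
    obtain a b c where \<xi>: "\<xi> = (a, b, c)" by (cases \<xi>) auto
    have "cis (2 * pi * x * a) * cis (2 * pi * x * b) * cis (2 * pi * x * c) = cis (2 * pi * x * (a + b + c))"
      by (simp add: cis_mult algebra_simps)
    then show "(case \<xi> of (\<xi>1, \<xi>2, \<xi>3) \<Rightarrow> fg \<xi>1 * cis (2 * pi * x * \<xi>1) * fg \<xi>2 * cis (2 * pi * x * \<xi>2) * fg \<xi>3 * cis (2 * pi * x * \<xi>3)) = Phi x \<xi>"
      unfolding \<xi> Phi_def fg_def by (simp add: mult_ac)
  qed
  show ?thesis
    unfolding C112_def fourier_fg eqf Sc_def[symmetric] by (simp add: set_lebesgue_integral_def)
qed

lemma F_integrable: "integrable lborel (\<lambda>\<xi>. indicator Sc \<xi> *\<^sub>R Phi x \<xi>)"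
proof (rule Bochner_Integration.integrable_bound)
  have "integrable lborel (\<lambda>z. gau (fst z) * (\<lambda>w. gau (fst w) * gau (snd w)) (snd z))"
    by (intro prod_int gau_integrable)
  then show "integrable lborel (\<lambda>z::real\<times>real\<times>real. gau (fst z) * (gau (fst (snd z)) * gau (snd (snd z))))"
    by simp
  show "AE z in lborel. norm (indicator Sc z *\<^sub>R Phi x z) \<le> norm (gau (fst z) * (gau (fst (snd z)) * gau (snd (snd z))))"
    by (auto simp: Phi_def norm_mult gau_def indicator_def)
qed measurable

lemma step2: "(\<integral>\<xi>. indicator Sc \<xi> *\<^sub>R Phi x \<xi> \<partial>lborel) = (\<integral>z. indicator Sc (Tm z) *\<^sub>R Phi x (Tm z) \<partial>lborel)"
  and step2i: "integrable lborel (\<lambda>z. indicator Sc (Tm z) *\<^sub>R Phi x (Tm z))"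
proof -
  have "(\<integral>\<xi>. indicator Sc \<xi> *\<^sub>R Phi x \<xi> \<partial>lborel) = (\<integral>\<xi>. indicator Sc \<xi> *\<^sub>R Phi x \<xi> \<partial>(distr lborel lborel Tm))"
    by (simp add: distr_Tm)
  also have "\<dots> = (\<integral>z. indicator Sc (Tm z) *\<^sub>R Phi x (Tm z) \<partial>lborel)"
    by (rule integral_distr) measurable
  finally show "(\<integral>\<xi>. indicator Sc \<xi> *\<^sub>R Phi x \<xi> \<partial>lborel) = (\<integral>z. indicator Sc (Tm z) *\<^sub>R Phi x (Tm z) \<partial>lborel)" .
  have "integrable (distr lborel lborel Tm) (\<lambda>\<xi>. indicator Sc \<xi> *\<^sub>R Phi x \<xi>)"
    using F_integrable by (simp add: distr_Tm)
  then show "integrable lborel (\<lambda>z. indicator Sc (Tm z) *\<^sub>R Phi x (Tm z))"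
    by (subst (asm) integrable_distr_eq) measurable
qed

definition Gf :: "real \<Rightarrow> real \<Rightarrow> real \<times> real \<Rightarrow> complex" where
  "Gf x a y = complex_of_real ((if 0 < fst y \<and> fst y < snd y then 1 else 0) *
      (gau a * gau (a + fst y) * gau (- snd y - 2 * a - fst y))) * cis (- (2 * pi * x) * snd y)"

lemma FT_eq: "indicator Sc (Tm z) *\<^sub>R Phi x (Tm z) = case_prod (Gf x) z"
proof -
  obtain a t s where z: "z = (a, t, s)" by (cases z) auto
  have c: "((a, a + t, - s - 2 * a - t) \<in> Sc) = (0 < t \<and> t < s)" unfolding Sc_def by (auto simp: field_simps)
  have e2: "2 * pi * x * (a + (a + t) + (- s - 2 * a - t)) = - (2 * pi * x) * s" by (simp add: algebra_simps)
  have "Tm z = (a, a + t, - s - 2 * a - t)" by (simp add: Tm_def z)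
  then show ?thesis unfolding z
    by (simp only: c e2 Phi_def Gf_def indicator_def scaleR_conv_of_real fst_conv snd_conv prod.case) simp
qed

lemma gau3: "gau a * gau (a + t) * gau (- s - 2 * a - t) =
   exp (- pi * (t\<^sup>2/2 + s\<^sup>2/3)) * exp (- (6 * pi) * (a + (3 * t + 2 * s)/6)\<^sup>2)"
proof -
  have "- pi * a\<^sup>2 + - pi * (a + t)\<^sup>2 + - pi * (- s - 2 * a - t)\<^sup>2 = - pi * (t\<^sup>2/2 + s\<^sup>2/3) + - (6 * pi) * (a + (3 * t + 2 * s)/6)\<^sup>2"
    by (simp add: power2_eq_square field_simps)
  then show ?thesis unfolding gau_def by (simp add: exp_add[symmetric])
qed

lemma gauss_int_shift:
  assumes k: "0 < (k::real)"
  shows "(\<integral>a. exp (- (k * (a + c)\<^sup>2)) \<partial>lborel) = sqrt (pi / k)"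
proof -
  define \<sigma> where "\<sigma> = sqrt (1 / (2 * k))"
  have s2: "\<sigma>\<^sup>2 = 1/(2 * k)" using k by (simp add: \<sigma>_def)
  have sp: "\<sigma> > 0" using k by (simp add: \<sigma>_def)
  have eq: "exp (- (k * (a + c)\<^sup>2)) = sqrt (pi / k) * normal_density (-c) \<sigma> a" for a
  proof -
    have "sqrt (2 * pi * \<sigma>\<^sup>2) = sqrt (pi / k)" using k by (simp add: s2)
    then show ?thesis using k sp unfolding normal_density_def s2
      by (simp add: field_simps)
  qed
  have n1: "(\<integral>a. normal_density (-c) \<sigma> a \<partial>lborel) = 1" by (rule integral_normal_density) (rule sp)
  have "(\<integral>a. sqrt (pi / k) * normal_density (-c) \<sigma> a \<partial>lborel) = sqrt (pi / k) * (\<integral>a. normal_density (-c) \<sigma> a \<partial>lborel)"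
    by (rule integral_mult_right_zero)
  then show ?thesis unfolding eq n1 by simp
qed

lemma inner_a: "(\<integral>a. Gf x a y \<partial>lborel) = complex_of_real ((if 0 < fst y \<and> fst y < snd y then 1 else 0) *
      (exp (- pi * ((fst y)\<^sup>2/2 + (snd y)\<^sup>2/3)) / sqrt 6)) * cis (- (2 * pi * x) * snd y)"
proof -
  have "(\<integral>a. Gf x a y \<partial>lborel) = complex_of_real (\<integral>a. (if 0 < fst y \<and> fst y < snd y then 1 else 0) *
      (exp (- pi * ((fst y)\<^sup>2/2 + (snd y)\<^sup>2/3)) * exp (- (6 * pi) * (a + (3 * fst y + 2 * snd y)/6)\<^sup>2)) \<partial>lborel) * cis (- (2 * pi * x) * snd y)"
    unfolding Gf_def gau3 by simp
  also have "(\<integral>a. (if 0 < fst y \<and> fst y < snd y then 1 else 0) *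
      (exp (- pi * ((fst y)\<^sup>2/2 + (snd y)\<^sup>2/3)) * exp (- (6 * pi) * (a + (3 * fst y + 2 * snd y)/6)\<^sup>2)) \<partial>lborel)
     = (if 0 < fst y \<and> fst y < snd y then 1 else 0) * (exp (- pi * ((fst y)\<^sup>2/2 + (snd y)\<^sup>2/3)) * sqrt (pi / (6 * pi)))"
  proof -
    have I: "(\<integral>a. exp (- (6 * pi * (a + (3 * fst y + 2 * snd y) / 6)\<^sup>2)) \<partial>lborel) = sqrt (pi / (6 * pi))"
      using gauss_int_shift[of "6 * pi" "(3 * fst y + 2 * snd y) / 6"] by simp
    show ?thesis by (simp add: I)
  qed
  also have "sqrt (pi / (6 * pi)) = 1 / sqrt 6" by (simp add: real_sqrt_divide)
  finally show ?thesis by simp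
qed

definition Qf :: "real \<Rightarrow> real \<times> real \<Rightarrow> complex" where
  "Qf x y = complex_of_real ((if 0 < fst y \<and> fst y < snd y then 1 else 0) *
      (exp (- pi * ((fst y)\<^sup>2 / 2 + (snd y)\<^sup>2 / 3)) / sqrt 6)) * cis (- (2 * pi * x) * snd y)"

lemma step3: "C112 fg fg fg x = (\<integral>y. Qf x y \<partial>lborel)" and step3i: "integrable lborel (Qf x)"
proof -
  have eqG: "(\<lambda>z. indicator Sc (Tm z) *\<^sub>R Phi x (Tm z)) = case_prod (Gf x)"
    by (rule ext) (rule FT_eq)
  have iG: "integrable (lborel \<Otimes>\<^sub>M lborel) (case_prod (Gf x))"
    using step2i[of x] unfolding eqG lborel_prod .
  have eqQ: "(\<lambda>y. \<integral>a. Gf x a y \<partial>lborel) = Qf x"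
    by (rule ext) (simp only: inner_a Qf_def)
  have "C112 fg fg fg x = integral\<^sup>L (lborel \<Otimes>\<^sub>M lborel) (case_prod (Gf x))"
    unfolding step1 step2 eqG lborel_prod ..
  also have "\<dots> = (\<integral>y. (\<integral>a. Gf x a y \<partial>lborel) \<partial>lborel)"
    by (rule lborel_pair.integral_snd[OF iG, symmetric])
  finally show "C112 fg fg fg x = (\<integral>y. Qf x y \<partial>lborel)" unfolding eqQ .
  show "integrable lborel (Qf x)"
    using lborel_pair.integrable_snd[OF iG] unfolding eqQ .
qed

lemma inner_t: "(\<integral>t. Qf x (t, s) \<partial>lborel) = indicator {0<..} s *\<^sub>R (complex_of_real (phi 0 s) * cis (- (2 * pi * x) * s))"
proof -
  have e: "Qf x (t, s) = complex_of_real (indicator {0<..<s} t * wB t * (gA s / sqrt 6)) * cis (- (2 * pi * x) * s)" for t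
  proof -
    have "exp (- pi * (t\<^sup>2 / 2 + s\<^sup>2 / 3)) = wB t * gA s"
      unfolding wB_def gA_def by (simp add: exp_add[symmetric] algebra_simps)
    then show ?thesis unfolding Qf_def by (simp add: indicator_def)
  qed
  have "(\<integral>t. Qf x (t, s) \<partial>lborel) = complex_of_real ((\<integral>t. indicator {0<..<s} t * wB t \<partial>lborel) * (gA s / sqrt 6)) * cis (- (2 * pi * x) * s)"
    unfolding e by (simp only: integral_mult_left_zero integral_complex_of_real)
  also have "\<dots> = indicator {0<..} s *\<^sub>R (complex_of_real (phi 0 s) * cis (- (2 * pi * x) * s))"
  proof (cases "0 < s")
    case True
    have "W s = (\<integral>t. indicator {0<..<s} t * wB t \<partial>lborel)"
      unfolding W_def using True
      by (simp add: interval_lebesgue_integral_def set_lebesgue_integral_def)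
    then show ?thesis using True
      by (simp add: phi_def Fam_def indicator_def[of "{0<..}"] mult_ac)
  next
    case False
    then have "indicator {0<..<s} t = (0::real)" for t by (auto simp: indicator_def)
    then show ?thesis using False by simp
  qed
  finally show ?thesis .
qed

theorem final_formula:
  "C112 fg fg fg x = (LBINT s=0..\<infinity>. complex_of_real (phi 0 s) * cis (- (2 * pi * x) * s))"
proof -
  have iQ: "integrable (lborel \<Otimes>\<^sub>M lborel) (case_prod (\<lambda>t s. Qf x (t, s)))"
    using step3i[of x] unfolding lborel_prod by simp
  have "C112 fg fg fg x = integral\<^sup>L (lborel \<Otimes>\<^sub>M lborel) (case_prod (\<lambda>t s. Qf x (t, s)))"
    unfolding step3 lborel_prod by simp
  also have "\<dots> = (\<integral>s. (\<integral>t. Qf x (t, s) \<partial>lborel) \<partial>lborel)"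
    by (rule lborel_pair.integral_snd[OF iQ, symmetric])
  also have "\<dots> = (\<integral>s. indicator {0<..} s *\<^sub>R (complex_of_real (phi 0 s) * cis (- (2 * pi * x) * s)) \<partial>lborel)"
    by (simp only: inner_t)
  also have "\<dots> = (LBINT s=0..\<infinity>. complex_of_real (phi 0 s) * cis (- (2 * pi * x) * s))"
    by (simp add: interval_lebesgue_integral_def set_lebesgue_integral_def zero_ereal_def)
  finally show ?thesis .
qed

lemma C112_lower: "\<exists>K>0. \<exists>X0\<ge>1. \<forall>x\<ge>X0. K / x^2 \<le> cmod (C112 fg fg fg x)"
proof -
  obtain \<omega>0 where w0: "\<omega>0 > 0" and A: "\<And>\<omega>. \<omega> \<ge> \<omega>0 \<Longrightarrow>
      (1 / sqrt 6) / (2 * \<omega>^2) \<le> norm (LBINT s=0..\<infinity>. complex_of_real (phi 0 s) * cis (- \<omega> * s))"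
    using asym by blast
  define K where "K = (1 / sqrt 6) / (8 * pi^2)"
  define X0 where "X0 = max 1 (\<omega>0 / (2 * pi))"
  have "K / x^2 \<le> cmod (C112 fg fg fg x)" if x: "x \<ge> X0" for x
  proof -
    have x1: "x \<ge> 1" using x by (simp add: X0_def)
    have "\<omega>0 / (2 * pi) \<le> x" using x by (simp add: X0_def)
    then have wx: "\<omega>0 \<le> 2 * pi * x" by (simp add: field_simps)
    have "K / x^2 = (1 / sqrt 6) / (2 * (2 * pi * x)^2)"
      unfolding K_def by (simp add: power_mult_distrib field_simps)
    also have "\<dots> \<le> cmod (C112 fg fg fg x)"
      unfolding final_formula using A[OF wx] by simp
    finally show ?thesis .
  qed
  moreover have "K > 0" by (simp add: K_def)
  moreover have "X0 \<ge> 1" by (simp add: X0_def)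
  ultimately show ?thesis by blast
qed

lemma inv_ennreal_ge1: "1 \<le> (p::ennreal) \<Longrightarrow> \<exists>a. inverse p = ennreal a \<and> 0 \<le> a \<and> a \<le> 1"
proof (cases p)
  case (real q)
  assume "1 \<le> p"
  then have q: "1 \<le> q" using real by (simp add: ennreal_le_iff2 ennreal_1[symmetric] del: ennreal_1)
  then show ?thesis using real by (intro exI[of _ "inverse q"]) (simp add: inverse_ennreal inverse_le_1_iff)
qed (auto intro: exI[of _ 0])

theorem proposition3p1:
  fixes p1 p2 p3 :: ennreal
  assumes "1 \<le> p1" "1 \<le> p2" "1 \<le> p3"
    and "inverse p1 + inverse p2 + inverse p3 \<ge> 2"
  defines "r \<equiv> inverse (inverse p1 + inverse p2 + inverse p3)"
  shows "r \<le> 1 / 2 \<and>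
    \<not> (\<exists>C :: real. \<forall>f1 f2 f3. schwartz f1 \<longrightarrow> schwartz f2 \<longrightarrow> schwartz f3 \<longrightarrow>
         Lp_norm r (C112 f1 f2 f3) \<le> ennreal C * Lp_norm p1 f1 * Lp_norm p2 f2 * Lp_norm p3 f3)"
proof -
  define S where "S = inverse p1 + inverse p2 + inverse p3"
  have r: "r = inverse S" by (simp add: r_def S_def)
  have S2: "2 \<le> S" using assms(4) by (simp add: S_def)
  obtain a1 where a1: "inverse p1 = ennreal a1" "0 \<le> a1" "a1 \<le> 1" using inv_ennreal_ge1[OF assms(1)] by blast
  obtain a2 where a2: "inverse p2 = ennreal a2" "0 \<le> a2" "a2 \<le> 1" using inv_ennreal_ge1[OF assms(2)] by blast
  obtain a3 where a3: "inverse p3 = ennreal a3" "0 \<le> a3" "a3 \<le> 1" using inv_ennreal_ge1[OF assms(3)] by blast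
  define s where "s = a1 + a2 + a3"
  have Ss: "S = ennreal s" using a1 a2 a3 by (simp add: S_def s_def ennreal_plus)
  have s2: "2 \<le> s" using S2 Ss a1 a2 a3 unfolding s_def
    by (metis ennreal_le_iff add_nonneg_nonneg ennreal_numeral numeral_le_iff zero_le_numeral ennreal_le_iff2 ) 
  have rs: "r = ennreal (1 / s)" using s2 by (simp add: r Ss inverse_ennreal divide_inverse)
  have h12: "(1::ennreal) / 2 = ennreal (1/2)" by (simp add: divide_ennreal_def)
  have rhalf: "r \<le> 1/2" using s2 unfolding rs h12 by (intro ennreal_leI) (simp add: field_simps)
  have rnz: "r \<noteq> \<infinity>" unfolding rs by simp
  define \<rho> where "\<rho> = enn2real r"
  have \<rho>s: "\<rho> = 1 / s" using s2 by (simp add: \<rho>_def rs)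
  have \<rho>pos: "0 < \<rho>" using s2 by (simp add: \<rho>s)
  have \<rho>le: "\<rho> \<le> 1/2" using s2 by (simp add: \<rho>s)
  obtain K X0 where K: "K > 0" "X0 \<ge> 1" "\<And>x. x \<ge> X0 \<Longrightarrow> K / x^2 \<le> cmod (C112 fg fg fg x)"
    using C112_lower by blast
  have Iinf: "(\<integral>\<^sup>+ x. ennreal (norm (C112 fg fg fg x) powr \<rho>) \<partial>lborel) = \<infinity>"
  proof -
    have "(\<integral>\<^sup>+ x. ennreal (K powr \<rho>) * (ennreal (inverse x) * indicator {X0..} x) \<partial>lborel)
         \<le> (\<integral>\<^sup>+ x. ennreal (norm (C112 fg fg fg x) powr \<rho>) \<partial>lborel)"
    proof (intro nn_integral_mono)
      fix x
      show "ennreal (K powr \<rho>) * (ennreal (inverse x) * indicator {X0..} x) \<le> ennreal (norm (C112 fg fg fg x) powr \<rho>)"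
      proof (cases "x \<ge> X0")
        case True
        have x1: "x \<ge> 1" using True K(2) by simp
        have "K powr \<rho> * inverse x \<le> K powr \<rho> * inverse (x powr (2*\<rho>))"
        proof (intro mult_left_mono)
          have "x powr (2*\<rho>) \<le> x powr 1" using x1 \<rho>le by (intro powr_mono) auto
          then show "inverse x \<le> inverse (x powr (2 * \<rho>))" using x1 \<rho>pos by (simp add: le_imp_inverse_le)
        qed simp
        also have "\<dots> = (K / x^2) powr \<rho>"
        proof -
          have "(K / x^2) powr \<rho> = K powr \<rho> / (x^2) powr \<rho>"
            using x1 K(1) by (simp add: powr_divide)
          also have "(x^2) powr \<rho> = x powr (2*\<rho>)"
          proof -
            have "x^2 = x powr 2" using x1 by (simp add: powr_numeral)
            then show ?thesis by (simp only: powr_powr)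
          qed
          finally show ?thesis by (simp only: divide_inverse)
        qed
        also have "\<dots> \<le> norm (C112 fg fg fg x) powr \<rho>"
          using K(3)[OF True] K(1) x1 \<rho>pos by (intro powr_mono2) auto
        finally have le: "K powr \<rho> * inverse x \<le> norm (C112 fg fg fg x) powr \<rho>" .
        have "ennreal (K powr \<rho>) * (ennreal (inverse x) * indicator {X0..} x) = ennreal (K powr \<rho> * inverse x)"
          using True x1 by (simp add: ennreal_mult)
        then show ?thesis using le by (simp add: ennreal_leI)
      qed simp
    qed
    moreover have "(\<integral>\<^sup>+ x. ennreal (K powr \<rho>) * (ennreal (inverse x) * indicator {X0..} x) \<partial>lborel) = \<infinity>"
      using K(1,2) by (subst nn_integral_cmult) (auto simp: nn_integral_inv_infinite ennreal_mult_top)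
    ultimately show ?thesis by (simp add: top_unique)
  qed
  have Linf: "Lp_norm r (C112 fg fg fg) = \<infinity>"
    using Iinf rnz by (simp add: Lp_norm_def Let_def \<rho>_def)
  have fin: "ennreal C * Lp_norm p1 fg * Lp_norm p2 fg * Lp_norm p3 fg < \<infinity>" for C
    using Lp_fg_finite[OF assms(1)] Lp_fg_finite[OF assms(2)] Lp_fg_finite[OF assms(3)]
    by (simp add: ennreal_mult_less_top)
  show ?thesis
  proof (intro conjI notI)
    show "r \<le> 1/2" by (rule rhalf)
  next
    assume "\<exists>C :: real. \<forall>f1 f2 f3. schwartz f1 \<longrightarrow> schwartz f2 \<longrightarrow> schwartz f3 \<longrightarrow>
         Lp_norm r (C112 f1 f2 f3) \<le> ennreal C * Lp_norm p1 f1 * Lp_norm p2 f2 * Lp_norm p3 f3"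
    then obtain C where "Lp_norm r (C112 fg fg fg) \<le> ennreal C * Lp_norm p1 fg * Lp_norm p2 fg * Lp_norm p3 fg"
      using schwartz_fg by blast
    then show False using Linf fin[of C] by simp
  qed
qed

end
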